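(* For any $\sigma\in\mathcal K$ and $\beta\in\mathcal{KL}$ there exist $\hat\rho\in\mathcal K$ and $\hat\beta\in\mathcal{KL}$ such that $\min\{\sigma(s),\beta(r,t)\}\le\hat\beta\big(s,\ \tfrac{t}{1+\hat\rho(r)}\big)$ for all $t,r,s\ge0$.
   Context: Class $\mathcal K$: continuous strictly increasing $\sigma:\mathbb R_{\ge0}\to\mathbb R_{\ge0}$ with $\sigma(0)=0$. Class $\mathcal{KL}$: continuous $\beta:\mathbb R_{\ge0}\times\mathbb R_{\ge0}\to\mathbb R_{\ge0}$ such that $\beta(\cdot,t)\in\mathcal K$ for each $t\ge0$ and, for each $s\ge0$, $\beta(s,t)$ decreases to $0$ as $t\to\infty$. *)

theory Defs
  imports "HOL-Analysis.Analysis"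
begin

text \<open>Class K: continuous, strictly increasing on [0,inf), zero at zero, nonnegative values.
  Functions are total on real; only their behaviour on the nonnegative reals matters.\<close>
definition class_K :: "(real \<Rightarrow> real) \<Rightarrow> bool" where
  "class_K \<sigma> \<longleftrightarrow> continuous_on {0..} \<sigma> \<and> strict_mono_on {0..} \<sigma> \<and> \<sigma> 0 = 0
     \<and> (\<forall>s\<ge>0. \<sigma> s \<ge> 0)"

definition class_KL :: "(real \<Rightarrow> real \<Rightarrow> real) \<Rightarrow> bool" where
  "class_KL \<beta> \<longleftrightarrow> continuous_on ({0..} \<times> {0..}) (\<lambda>(s,t). \<beta> s t)
     \<and> (\<forall>t\<ge>0. class_K (\<lambda>s. \<beta> s t))
     \<and> (\<forall>s\<ge>0. antimono_on {0..} (\<beta> s) \<and> ((\<beta> s) \<longlongrightarrow> 0) at_top)"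

end

theory Submission imports Defs begin

lemma rho_exists:
  fixes T :: "nat \<Rightarrow> real"
  assumes T1: "\<And>n. T n \<ge> 1"
  shows "\<exists>\<rho>. class_K \<rho> \<and> (\<forall>r>1. T (nat \<lceil>r\<rceil>) \<le> 1 + \<rho> r)"
proof -
  define F :: "nat \<Rightarrow> real \<Rightarrow> real" where
    "F N r = r + (\<Sum>k<N. T (k+2) * max 0 (r - real k))" for N r
  define \<rho> where "\<rho> r = F (nat \<lceil>r\<rceil> + 1) r" for r
  have Fst: "F M r = F N r" if "r \<le> real N" "N \<le> M" for M N r
  proof -
    have "(\<Sum>k<M. T (k+2) * max 0 (r - real k)) = (\<Sum>k<N. T (k+2) * max 0 (r - real k))"
      by (rule sum.mono_neutral_right) (use that in auto)
    then show ?thesis by (simp add: F_def)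
  qed
  have rhoF: "\<rho> r = F M r" if "nat \<lceil>r\<rceil> + 1 \<le> M" for r M
    unfolding \<rho>_def by (rule Fst[symmetric]) (use that in linarith)+
  have Fcont: "continuous_on UNIV (F N)" for N
    unfolding F_def by (intro continuous_intros)
  have cont: "continuous_on UNIV \<rho>"
  proof (rule continuous_at_imp_continuous_on, intro ballI)
    fix x :: real
    have ev: "\<forall>\<^sub>F y in nhds x. \<rho> y = F (nat \<lceil>x\<rceil> + 2) y"
    proof -
      have "\<forall>\<^sub>F y in nhds x. y < x + 1"
        using eventually_nhds_in_open[of "{..<x+1}" x] by simp
      then show ?thesis
      proof eventually_elim
        case (elim y)
        then have "nat \<lceil>y\<rceil> \<le> nat \<lceil>x\<rceil> + 1" by linarith
        then show ?case by (intro rhoF) simp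
      qed
    qed
    have "isCont (F (nat \<lceil>x\<rceil> + 2)) x"
      using Fcont by (simp add: continuous_on_eq_continuous_at)
    then show "isCont \<rho> x" using isCont_cong[OF ev] by simp
  qed
  have Fmono: "F M a < F M b" if "a < b" for a b M
  proof -
    have "(\<Sum>k<M. T (k+2) * max 0 (a - real k)) \<le> (\<Sum>k<M. T (k+2) * max 0 (b - real k))"
      by (intro sum_mono mult_left_mono) (use that T1[of "_ + 2"] in \<open>auto intro: order_trans[OF zero_le_one]\<close>)
    then show ?thesis using that by (simp add: F_def)
  qed
  have smono: "strict_mono_on {0..} \<rho>"
  proof (rule strict_mono_onI)
    fix a b :: real assume ab: "a \<in> {0..}" "b \<in> {0..}" "a < b"
    have "\<rho> a = F (nat \<lceil>b\<rceil> + 1) a" by (rule rhoF) (use ab in linarith)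
    moreover have "\<rho> b = F (nat \<lceil>b\<rceil> + 1) b" by (rule rhoF) simp
    ultimately show "\<rho> a < \<rho> b" using Fmono[OF ab(3)] by simp
  qed
  have r0: "\<rho> 0 = 0" by (simp add: \<rho>_def F_def)
  have nonneg: "\<rho> s \<ge> 0" if "s \<ge> 0" for s
    using smono r0 that by (metis atLeast_iff less_eq_real_def order_refl strict_mono_onD)
  have bound: "T (nat \<lceil>r\<rceil>) \<le> 1 + \<rho> r" if "r > 1" for r
  proof -
    define n where "n = nat \<lceil>r\<rceil>"
    have n2: "n \<ge> 2" and rn: "r > real n - 1" using that unfolding n_def by linarith+
    have e: "n - 2 + 2 = n" using n2 by simp
    have "1 \<le> max 0 (r - real (n - 2))" using n2 rn by (simp add: of_nat_diff)
    then have "T n * 1 \<le> T (n - 2 + 2) * max 0 (r - real (n - 2))"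
      unfolding e using T1[of n] by (intro mult_left_mono) auto
    also have "\<dots> \<le> (\<Sum>k<n+1. T (k+2) * max 0 (r - real k))"
    proof (rule member_le_sum)
      fix k assume "k \<in> {..<n+1} - {n-2}"
      have "0 \<le> T (k+2)" using T1[of "k+2"] by linarith
      then show "0 \<le> T (k+2) * max 0 (r - real k)" by simp
    qed (use n2 in auto)
    finally have "T n \<le> \<rho> r" using that by (simp add: \<rho>_def F_def n_def)
    then show ?thesis unfolding n_def by simp
  qed
  have "class_K \<rho>"
    unfolding class_K_def using cont smono r0 nonneg
    by (auto intro: continuous_on_subset)
  then show ?thesis using bound by blast
qed

theorem lemmaA1:
  fixes \<sigma> :: "real \<Rightarrow> real" and \<beta> :: "real \<Rightarrow> real \<Rightarrow> real"
  assumes "class_K \<sigma>" and "class_KL \<beta>"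
  shows "\<exists>\<rho>h \<beta>h. class_K \<rho>h \<and> class_KL \<beta>h \<and>
           (\<forall>t\<ge>0. \<forall>r\<ge>0. \<forall>s\<ge>0. min (\<sigma> s) (\<beta> r t) \<le> \<beta>h s (t / (1 + \<rho>h r)))"
proof -
  have \<sigma>cont: "continuous_on {0..} \<sigma>" and \<sigma>mono: "strict_mono_on {0..} \<sigma>"
    and \<sigma>0: "\<sigma> 0 = 0" and \<sigma>nn: "\<And>s. s \<ge> 0 \<Longrightarrow> \<sigma> s \<ge> 0"
    using assms(1) unfolding class_K_def by auto
  have \<beta>cont: "continuous_on ({0..} \<times> {0..}) (\<lambda>(s,t). \<beta> s t)"
    and \<beta>K: "\<And>t. t \<ge> 0 \<Longrightarrow> class_K (\<lambda>s. \<beta> s t)"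
    and \<beta>anti: "\<And>s. s \<ge> 0 \<Longrightarrow> antimono_on {0..} (\<beta> s)"
    and \<beta>lim: "\<And>s. s \<ge> 0 \<Longrightarrow> ((\<beta> s) \<longlongrightarrow> 0) at_top"
    using assms(2) unfolding class_KL_def by auto
  have \<beta>nn: "\<beta> s t \<ge> 0" if "s \<ge> 0" "t \<ge> 0" for s t
    using \<beta>K[OF that(2)] that(1) unfolding class_K_def by auto
  have \<beta>mono: "\<beta> r t \<le> \<beta> r' t" if "0 \<le> r" "r \<le> r'" "t \<ge> 0" for r r' t
  proof (cases "r = r'")
    case False
    have sm: "strict_mono_on {0..} (\<lambda>s. \<beta> s t)" using \<beta>K[OF that(3)] unfolding class_K_def by blast
    have "\<beta> r t < \<beta> r' t" using strict_mono_onD[OF sm, of r r'] that False by simp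
    then show ?thesis by simp
  qed simp
  have \<beta>dec: "\<beta> s t' \<le> \<beta> s t" if "0 \<le> s" "0 \<le> t" "t \<le> t'" for s t t'
    using monotone_onD[OF \<beta>anti[OF that(1)], of t t'] that by simp
  have \<beta>tcont: "continuous_on {0..} (\<beta> s)" if "s \<ge> 0" for s
  proof -
    have "continuous_on {0..} (\<lambda>t. (\<lambda>(s,t). \<beta> s t) (s, t))"
      by (rule continuous_on_compose2[OF \<beta>cont]) (use that in \<open>auto intro!: continuous_on_Pair continuous_on_const continuous_on_id\<close>)
    then show ?thesis by simp
  qed
  have "\<forall>n. \<exists>t. t \<ge> 1 \<and> \<beta> (real n) t \<le> (1/2)^n"
  proof
    fix n :: nat
    have "\<forall>\<^sub>F t in at_top. \<beta> (real n) t < (1/2)^n"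
      by (rule order_tendstoD(2)[OF \<beta>lim]) auto
    then obtain t0 where t0: "\<And>t. t \<ge> t0 \<Longrightarrow> \<beta> (real n) t < (1/2)^n"
      unfolding eventually_at_top_linorder by blast
    show "\<exists>t. t \<ge> 1 \<and> \<beta> (real n) t \<le> (1/2)^n"
      using t0[of "max 1 t0"] by (intro exI[of _ "max 1 t0"]) auto
  qed
  then obtain T where T1: "\<And>n. T n \<ge> 1" and Tb: "\<And>n. \<beta> (real n) (T n) \<le> (1/2)^n"
    by metis
  from rho_exists[of T, OF T1] obtain \<rho> where \<rho>K: "class_K \<rho>" and \<rho>b': "\<forall>r>1. T (nat \<lceil>r\<rceil>) \<le> 1 + \<rho> r"
    by (elim exE conjE)
  have \<rho>b: "T (nat \<lceil>r\<rceil>) \<le> 1 + \<rho> r" if "r > 1" for r using \<rho>b' that by simp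
  have \<rho>nn: "\<rho> r \<ge> 0" if "r \<ge> 0" for r using \<rho>K that unfolding class_K_def by simp
  define f where "f n \<tau> = \<beta> (real n) (max 1 \<tau> * T n)" for n \<tau>
  define g where "g \<tau> = \<beta> 1 (max 1 \<tau>) + (\<Sum>n. f n \<tau>)" for \<tau>
  have Tpos: "T n > 0" for n using T1[of n] by linarith
  have fnn: "f n \<tau> \<ge> 0" for n \<tau>
    unfolding f_def using Tpos[of n] by (intro \<beta>nn) auto
  have fle: "f n \<tau> \<le> (1/2)^n" for n \<tau>
  proof -
    have "f n \<tau> \<le> \<beta> (real n) (T n)"
      unfolding f_def using Tpos[of n] by (intro \<beta>dec) auto
    then show ?thesis using Tb[of n] by linarith
  qed
  have fsum: "summable (\<lambda>n. f n \<tau>)" for \<tau>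
    by (rule summable_comparison_test[OF _ summable_geometric[of "1/2"]])
       (use fnn fle in auto)
  have suminf_nn: "(\<Sum>n. f n \<tau>) \<ge> 0" for \<tau>
    using fsum fnn by (simp add: suminf_nonneg)
  have fanti: "f n \<tau>' \<le> f n \<tau>" if "\<tau> \<le> \<tau>'" for n \<tau> \<tau>'
  proof -
    have "max 1 \<tau> * T n \<le> max 1 \<tau>' * T n"
      by (rule mult_right_mono) (use that Tpos[of n] in auto)
    then show ?thesis using Tpos[of n] unfolding f_def by (intro \<beta>dec) auto
  qed
  have gnn: "g \<tau> \<ge> 0" for \<tau>
    unfolding g_def using suminf_nn[of \<tau>] \<beta>nn[of 1 "max 1 \<tau>"] by auto
  have ganti: "g \<tau>' \<le> g \<tau>" if "\<tau> \<le> \<tau>'" for \<tau> \<tau>'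
  proof -
    have "(\<Sum>n. f n \<tau>') \<le> (\<Sum>n. f n \<tau>)"
      by (rule suminf_le[OF _ fsum fsum]) (use fanti that in auto)
    moreover have "\<beta> 1 (max 1 \<tau>') \<le> \<beta> 1 (max 1 \<tau>)"
      using that by (intro \<beta>dec) auto
    ultimately show ?thesis unfolding g_def by linarith
  qed
  have fcont: "continuous_on UNIV (f n)" for n
  proof -
    have a: "continuous_on UNIV (\<lambda>\<tau>::real. max 1 \<tau> * T n)" by (intro continuous_intros)
    have b: "(\<lambda>\<tau>::real. max 1 \<tau> * T n) ` UNIV \<subseteq> {0..}" using Tpos[of n] by (auto intro!: mult_nonneg_nonneg)
    have "continuous_on UNIV (\<lambda>\<tau>. \<beta> (real n) (max 1 \<tau> * T n))"
      by (rule continuous_on_compose2[OF _ a b]) (rule \<beta>tcont, simp)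



    then show ?thesis unfolding f_def by (simp add: fun_eq_iff)
  qed
  have gcont: "continuous_on UNIV g"
  proof -


    have ul: "uniform_limit UNIV (\<lambda>N \<tau>. \<Sum>i<N. f i \<tau>) (\<lambda>\<tau>. \<Sum>i. f i \<tau>) sequentially"
      by (rule Weierstrass_m_test[OF _ summable_geometric[of "1/2"]]) (use fnn fle in auto)
    have cs: "\<forall>\<^sub>F N in sequentially. continuous_on UNIV (\<lambda>\<tau>. \<Sum>i<N. f i \<tau>)"
      by (intro always_eventually allI continuous_on_sum fcont)
    have c1: "continuous_on UNIV (\<lambda>\<tau>. \<Sum>i. f i \<tau>)"
      by (rule uniform_limit_theorem[OF cs ul]) simp

    have c2: "continuous_on UNIV (\<lambda>\<tau>. \<beta> 1 (max 1 \<tau>))"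
      by (rule continuous_on_compose2[OF _ continuous_on_max[OF continuous_on_const continuous_on_id]])
         (auto intro!: \<beta>tcont)
    show ?thesis unfolding g_def by (rule continuous_on_add[OF c2 c1])
  qed
  have mx: "filterlim (\<lambda>\<tau>::real. max 1 \<tau>) at_top at_top"
    by (rule filterlim_at_top_mono[OF filterlim_ident]) auto
  have glim: "(g \<longlongrightarrow> 0) at_top"
  proof -
    have lim1: "((\<lambda>\<tau>. \<beta> 1 (max 1 \<tau>)) \<longlongrightarrow> 0) at_top"
      by (rule filterlim_compose[OF \<beta>lim[of 1] mx]) simp
    have "((\<lambda>\<tau>. \<Sum>n. f n \<tau>) \<longlongrightarrow> (\<Sum>n. (0::real))) at_top"
    proof (rule tannerys_theorem[THEN conjunct2, THEN conjunct2])
      fix k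
      show "((\<lambda>\<tau>. f k \<tau>) \<longlongrightarrow> 0) at_top"
        unfolding f_def
      proof (rule filterlim_compose[OF \<beta>lim])
        show "filterlim (\<lambda>\<tau>. max 1 \<tau> * T k) at_top at_top"
          by (rule filterlim_at_top_mult_tendsto_pos[OF tendsto_const Tpos mx])
      qed simp
    next
      show "\<forall>\<^sub>F (k, \<tau>) in at_top \<times>\<^sub>F at_top. norm (f k \<tau>) \<le> (1/2)^k"
      proof (rule always_eventually, intro allI)
        fix x :: "nat \<times> real"
        show "case x of (k, \<tau>) \<Rightarrow> norm (f k \<tau>) \<le> (1/2)^k"
          by (cases x) (simp add: abs_of_nonneg fnn fle)
      qed
    qed (simp_all add: summable_geometric)
    then show ?thesis unfolding g_def using tendsto_add[OF lim1] by fastforce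
  qed
  define \<beta>h where "\<beta>h s \<tau> = \<sigma> s / max 1 \<tau> + min (\<sigma> s) (g \<tau>)" for s \<tau>
  have KL: "class_KL \<beta>h"
    unfolding class_KL_def
  proof (intro conjI allI impI)
    let ?S = "{0..} \<times> {0..} :: (real \<times> real) set"
    have cs: "continuous_on ?S (\<lambda>x. \<sigma> (fst x))"
      by (rule continuous_on_compose2[OF \<sigma>cont continuous_on_fst]) auto
    have cg: "continuous_on ?S (\<lambda>x. g (snd x))"
      by (rule continuous_on_compose2[OF gcont continuous_on_snd]) auto
    have cm: "continuous_on ?S (\<lambda>x. max 1 (snd x))"
      by (intro continuous_on_max continuous_on_const continuous_on_snd continuous_on_id)
    have "continuous_on ?S (\<lambda>x. \<sigma> (fst x) / max 1 (snd x) + min (\<sigma> (fst x)) (g (snd x)))"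
      by (rule continuous_on_add[OF continuous_on_divide[OF cs cm] continuous_on_min[OF cs cg]]) auto
    then show "continuous_on ?S (\<lambda>(s, t). \<beta>h s t)"
      by (simp add: \<beta>h_def case_prod_beta')
  next
    fix t :: real assume t: "t \<ge> 0"
    have c: "continuous_on {0..} (\<lambda>s. \<sigma> s / max 1 t + min (\<sigma> s) (g t))"
      by (rule continuous_on_add[OF continuous_on_divide[OF \<sigma>cont continuous_on_const] continuous_on_min[OF \<sigma>cont continuous_on_const]]) auto
    have m: "strict_mono_on {0..} (\<lambda>s. \<beta>h s t)"
    proof (rule strict_mono_onI)
      fix a b :: real assume ab: "a \<in> {0..}" "b \<in> {0..}" "a < b"
      have "\<sigma> a < \<sigma> b" using strict_mono_onD[OF \<sigma>mono ab] .
      then have "\<sigma> a / max 1 t < \<sigma> b / max 1 t" by (simp add: divide_strict_right_mono)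
      moreover have "min (\<sigma> a) (g t) \<le> min (\<sigma> b) (g t)" using \<open>\<sigma> a < \<sigma> b\<close> by simp
      ultimately show "\<beta>h a t < \<beta>h b t" unfolding \<beta>h_def by linarith
    qed
    have z: "\<beta>h 0 t = 0" unfolding \<beta>h_def using \<sigma>0 gnn[of t] by simp
    have nn: "\<forall>s\<ge>0. \<beta>h s t \<ge> 0" unfolding \<beta>h_def using \<sigma>nn gnn[of t] by simp
    show "class_K (\<lambda>s. \<beta>h s t)"
      unfolding class_K_def using c m z nn by (simp add: \<beta>h_def)
  next
    fix s :: real assume s: "s \<ge> 0"
    show "antimono_on {0..} (\<beta>h s)"
    proof (rule monotone_onI)
      fix a b :: real assume ab: "a \<in> {0..}" "b \<in> {0..}" "a \<le> b"
      have "\<sigma> s / max 1 b \<le> \<sigma> s / max 1 a"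
        using \<sigma>nn[OF s] ab by (intro divide_left_mono) auto
      moreover have "min (\<sigma> s) (g b) \<le> min (\<sigma> s) (g a)" using ganti[OF ab(3)] by simp
      ultimately show "\<beta>h s b \<le> \<beta>h s a" unfolding \<beta>h_def by linarith
    qed
    have l1: "((\<lambda>\<tau>. \<sigma> s / max 1 \<tau>) \<longlongrightarrow> 0) at_top"
      by (rule tendsto_divide_0[OF tendsto_const filterlim_at_top_imp_at_infinity[OF mx]])
    have l2: "((\<lambda>\<tau>. min (\<sigma> s) (g \<tau>)) \<longlongrightarrow> min (\<sigma> s) 0) at_top"
      by (rule tendsto_min[OF tendsto_const glim])
    have "((\<lambda>\<tau>. \<sigma> s / max 1 \<tau> + min (\<sigma> s) (g \<tau>)) \<longlongrightarrow> 0 + min (\<sigma> s) 0) at_top"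
      by (rule tendsto_add[OF l1 l2])
    then show "((\<beta>h s) \<longlongrightarrow> 0) at_top"
      using \<sigma>nn[OF s] by (simp add: \<beta>h_def[abs_def])
  qed
  have ineq: "min (\<sigma> s) (\<beta> r t) \<le> \<beta>h s (t / (1 + \<rho> r))"
    if t: "t \<ge> 0" and r: "r \<ge> 0" and s: "s \<ge> 0" for t r s
  proof -
    define \<tau> where "\<tau> = t / (1 + \<rho> r)"
    have rp: "1 + \<rho> r \<ge> 1" using \<rho>nn[OF r] by simp
    have \<tau>nn: "\<tau> \<ge> 0" unfolding \<tau>_def using t rp by simp
    have tt: "t = \<tau> * (1 + \<rho> r)" unfolding \<tau>_def using rp by simp
    show ?thesis
    proof (cases "\<tau> \<le> 1")
      case True
      then have "\<beta>h s \<tau> = \<sigma> s + min (\<sigma> s) (g \<tau>)" unfolding \<beta>h_def by simp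
      moreover have "min (\<sigma> s) (g \<tau>) \<ge> 0" using \<sigma>nn[OF s] gnn[of \<tau>] by simp
      ultimately show ?thesis unfolding \<tau>_def[symmetric] by linarith
    next
      case False
      then have \<tau>1: "\<tau> > 1" by simp
      have \<tau>t: "\<tau> \<le> t" using tt \<tau>nn rp by (simp add: mult_le_cancel_left1 mult_le_cancel_left) 
      have key: "\<beta> r t \<le> g \<tau>"
      proof (cases "r \<le> 1")
        case True
        have "\<beta> r t \<le> \<beta> 1 t" using \<beta>mono[OF r True t] .
        also have "\<dots> \<le> \<beta> 1 \<tau>" using \<beta>dec[of 1 \<tau> t] \<tau>nn \<tau>t by simp
        also have "\<dots> = \<beta> 1 (max 1 \<tau>)" using \<tau>1 by simp
        also have "\<dots> \<le> g \<tau>" unfolding g_def using suminf_nn[of \<tau>] by simp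
        finally show ?thesis .
      next
        case False
        define n where "n = nat \<lceil>r\<rceil>"
        have rn: "r \<le> real n" unfolding n_def by linarith
        have Tn: "T n \<le> 1 + \<rho> r" unfolding n_def using \<rho>b False by simp
        have "\<beta> r t \<le> \<beta> (real n) t" using \<beta>mono[OF r rn t] .
        also have "\<dots> \<le> \<beta> (real n) (\<tau> * T n)"
        proof (rule \<beta>dec)
          show "\<tau> * T n \<le> t" using tt Tn \<tau>nn by (simp add: mult_left_mono)
          show "0 \<le> \<tau> * T n" using \<tau>nn Tpos[of n] by simp
        qed simp
        also have "\<dots> = f n \<tau>" unfolding f_def using \<tau>1 by simp
        also have "\<dots> \<le> (\<Sum>n. f n \<tau>)"
          using sum_le_suminf[OF fsum[of \<tau>], of "{n}"] fnn by simp
        also have "\<dots> \<le> g \<tau>" unfolding g_def using \<beta>nn[of 1 "max 1 \<tau>"] by simp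
        finally show ?thesis .
      qed
      have "min (\<sigma> s) (\<beta> r t) \<le> min (\<sigma> s) (g \<tau>)" using key by simp
      also have "\<dots> \<le> \<beta>h s \<tau>" unfolding \<beta>h_def using \<sigma>nn[OF s] by simp
      finally show ?thesis unfolding \<tau>_def .
    qed
  qed
  show ?thesis
    by (rule exI[of _ \<rho>], rule exI[of _ \<beta>h]) (use \<rho>K KL ineq in blast)
qed

end
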